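(* Let $w\in S_n$ and let the Rothe diagram $D(w)$ have columns $D_1,\ldots,D_n$. Then $w$ is fireworks if and only if, for every $j\in[n]$, $D_{w(j)}\neq\emptyset$ implies $\max(D_{w(j)})=j-1$.
   Context: Permutations are written in one-line notation $w(1)w(2)\cdots w(n)$. The Rothe diagram is $D(w)=\{(i,j)\in[n]^2: i<w^{-1}(j),\ j<w(i)\}$, with column $D_j=\{i:(i,j)\in D(w)\}$. The decreasing runs of $w$ are the maximal consecutive decreasing segments of the one-line notation. A permutation is fireworks if the initial elements of its decreasing runs occur in increasing order (e.g. $267419853$ has runs $2|6|741|9853$ and is fireworks). *)

theory Defs
  imports "HOL-Combinatorics.Permutations"
begin

text \<open>Permutations of [n] = {1..n} are functions w with w permutes {1..n};
 one-line notation is w(1) w(2) ... w(n).\<close>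

definition rothe_diagram :: "nat \<Rightarrow> (nat \<Rightarrow> nat) \<Rightarrow> (nat \<times> nat) set" where
  "rothe_diagram n w = {(i, j). i \<in> {1..n} \<and> j \<in> {1..n} \<and> i < inv w j \<and> j < w i}"

definition rothe_column :: "nat \<Rightarrow> (nat \<Rightarrow> nat) \<Rightarrow> nat \<Rightarrow> nat set" where
  "rothe_column n w j = {i. (i, j) \<in> rothe_diagram n w}"

text \<open>Position i starts a maximal decreasing run of w(1)...w(n) iff i = 1 or w(i-1) < w(i).\<close>
definition run_start :: "nat \<Rightarrow> (nat \<Rightarrow> nat) \<Rightarrow> nat \<Rightarrow> bool" where
  "run_start n w i \<longleftrightarrow> i \<in> {1..n} \<and> (i = 1 \<or> w (i - 1) < w i)"

definition fireworks :: "nat \<Rightarrow> (nat \<Rightarrow> nat) \<Rightarrow> bool" where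
  "fireworks n w \<longleftrightarrow>
     (\<forall>i k. run_start n w i \<and> run_start n w k \<and> i < k \<longrightarrow> w i < w k)"

end

theory Submission
  imports Defs
begin

lemma col_eq:
  assumes p: "w permutes {1..n}" and j: "j \<in> {1..n}"
  shows "rothe_column n w (w j) = {i. 1 \<le> i \<and> i < j \<and> w j < w i}"
proof -
  have "w j \<in> {1..n}" using permutes_in_image[OF p, of j] j by blast
  moreover have "inv w (w j) = j" using p by (simp add: permutes_inverses(2))
  ultimately show ?thesis using j
    unfolding rothe_column_def rothe_diagram_def by auto
qed

lemma run_start_exists:
  assumes "i \<in> {1..n}"
  shows "\<exists>s. run_start n w s \<and> s \<le> i \<and> w i \<le> w s"
  using assms
proof (induction i)
  case 0 then show ?case by simp
next
  case (Suc m)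
  show ?case
  proof (cases "Suc m = 1 \<or> w m < w (Suc m)")
    case True
    then show ?thesis using Suc.prems by (intro exI[of _ "Suc m"]) (auto simp: run_start_def)
  next
    case False
    then have "m \<in> {1..n}" "w (Suc m) \<le> w m" using Suc.prems by auto
    then obtain s where "run_start n w s" "s \<le> m" "w m \<le> w s" using Suc.IH by blast
    then show ?thesis using \<open>w (Suc m) \<le> w m\<close> by (intro exI[of _ s]) auto
  qed
qed

theorem proposition3p9:
  fixes n :: nat and w :: "nat \<Rightarrow> nat"
  assumes "w permutes {1..n}"
  shows "fireworks n w \<longleftrightarrow>
    (\<forall>j\<in>{1..n}. rothe_column n w (w j) \<noteq> {} \<longrightarrow> Max (rothe_column n w (w j)) = j - 1)"
proof -
  have inj: "\<And>a b. w a = w b \<Longrightarrow> a = b"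
    using assms by (metis permutes_inj injD)
  define P where "P \<longleftrightarrow> (\<forall>j. run_start n w j \<longrightarrow> (\<forall>i. 1 \<le> i \<and> i < j \<longrightarrow> w i < w j))"
  have fwP: "fireworks n w \<longleftrightarrow> P"
  proof
    assume fw: "fireworks n w"
    show P unfolding P_def
    proof (intro allI impI)
      fix j i assume rj: "run_start n w j" and ij: "1 \<le> i \<and> i < j"
      then have "i \<in> {1..n}" by (auto simp: run_start_def)
      then obtain s where "run_start n w s" "s \<le> i" "w i \<le> w s"
        using run_start_exists by blast
      moreover have "w s < w j" using fw rj \<open>run_start n w s\<close> \<open>s \<le> i\<close> ij
        unfolding fireworks_def by auto
      ultimately show "w i < w j" by simp
    qed
  next
    assume P
    show "fireworks n w" unfolding fireworks_def
    proof (intro allI impI)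
      fix i k assume h: "run_start n w i \<and> run_start n w k \<and> i < k"
      then have "1 \<le> i" by (simp add: run_start_def)
      moreover have "run_start n w k" "i < k" using h by simp_all
      moreover have "\<forall>i. 1 \<le> i \<and> i < k \<longrightarrow> w i < w k"
        using mp[OF spec[OF \<open>P\<close>[unfolded P_def], of k] \<open>run_start n w k\<close>] .
      ultimately show "w i < w k" by simp
    qed
  qed
  have PR: "P \<longleftrightarrow> (\<forall>j\<in>{1..n}. rothe_column n w (w j) \<noteq> {} \<longrightarrow> Max (rothe_column n w (w j)) = j - 1)"
  proof
    assume P
    show "\<forall>j\<in>{1..n}. rothe_column n w (w j) \<noteq> {} \<longrightarrow> Max (rothe_column n w (w j)) = j - 1"
    proof (intro ballI impI)
      fix j assume j: "j \<in> {1..n}" and ne: "rothe_column n w (w j) \<noteq> {}"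
      let ?C = "rothe_column n w (w j)"
      have C: "?C = {i. 1 \<le> i \<and> i < j \<and> w j < w i}" using col_eq[OF assms j] .
      have fin: "finite ?C" unfolding C by (rule finite_subset[of _ "{..<j}"]) auto
      from ne obtain i0 where "i0 \<in> ?C" by blast
      then have i0: "1 \<le> i0" "i0 < j" "w j < w i0" unfolding C by simp_all
      have jm: "j - 1 \<in> ?C"
      proof (rule ccontr)
        assume "j - 1 \<notin> ?C"
        then have "\<not> (1 \<le> j - 1 \<and> j - 1 < j \<and> w j < w (j - 1))" unfolding C by simp
        then have "\<not> w j < w (j - 1)" using i0 by linarith
        moreover have "w (j-1) \<noteq> w j"
        proof
          assume "w (j-1) = w j"
          then have "j-1 = j" by (rule inj)
          with i0 show False by simp
        qed
        ultimately have "run_start n w j" using j unfolding run_start_def by auto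
        then have "\<forall>i. 1 \<le> i \<and> i < j \<longrightarrow> w i < w j"
          using mp[OF spec[OF \<open>P\<close>[unfolded P_def], of j]] by blast
        then have "w i0 < w j" using i0 by blast
        then show False using i0 by simp
      qed
      have "Max ?C \<in> ?C" using fin ne by (rule Max_in)
      moreover have "\<forall>x\<in>?C. x < j" unfolding C by simp
      ultimately have "Max ?C \<le> j - 1" by fastforce
      moreover have "j - 1 \<le> Max ?C" using fin jm by (rule Max_ge)
      ultimately show "Max ?C = j - 1" by simp
    qed
  next
    assume R: "\<forall>j\<in>{1..n}. rothe_column n w (w j) \<noteq> {} \<longrightarrow> Max (rothe_column n w (w j)) = j - 1"
    show P unfolding P_def
    proof (intro allI impI)
      fix j i assume rj: "run_start n w j" and ij: "1 \<le> i \<and> i < j"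
      have j: "j \<in> {1..n}" using rj by (simp add: run_start_def)
      let ?C = "rothe_column n w (w j)"
      have C: "?C = {i. 1 \<le> i \<and> i < j \<and> w j < w i}" using col_eq[OF assms j] .
      have fin: "finite ?C" unfolding C by (rule finite_subset[of _ "{..<j}"]) auto
      show "w i < w j"
      proof (rule ccontr)
        assume "\<not> w i < w j"
        moreover have "w i \<noteq> w j"
        proof
          assume "w i = w j"
          then have "i = j" by (rule inj)
          with ij show False by simp
        qed
        ultimately have "w j < w i" by simp
        then have "i \<in> ?C" unfolding C using ij by simp
        then have ne: "?C \<noteq> {}" by auto
        then have "Max ?C \<in> ?C" using fin by (intro Max_in)
        moreover have "Max ?C = j - 1" using R j ne by blast
        ultimately have "j - 1 \<in> ?C" by simp
        then have "w j < w (j - 1)" unfolding C by simp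
        then show False using rj ij unfolding run_start_def by auto
      qed
    qed
  qed
  show ?thesis using fwP PR by simp
qed

end
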